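(* For every $k\ge 3$, $$\sum_{n\ge0}|S_n(123,\,3214,\,21(k+1)k(k-1)\cdots 43)|\,x^n=\frac{1-2x+x^k}{1-3x+x^2+x^k}.$$ *)

theory Defs
  imports "HOL-Combinatorics.Multiset_Permutations" "HOL-Computational_Algebra.Formal_Power_Series"
begin

text \<open>Permutations of [n] in one-line notation are lists in permutations_of_set {1..n}.
A word w contains pattern p if some subsequence of w (at strictly increasing positions)
is order-isomorphic to p.\<close>

definition contains_pattern :: "nat list \<Rightarrow> nat list \<Rightarrow> bool" where
  "contains_pattern w p \<longleftrightarrow>
     (\<exists>is. length is = length p \<and> sorted_wrt (<) is \<and> (\<forall>i\<in>set is. i < length w) \<and>
        (\<forall>a<length p. \<forall>b<length p. (p ! a < p ! b \<longleftrightarrow> w ! (is ! a) < w ! (is ! b))))"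

definition avoiding_perms :: "nat \<Rightarrow> nat list set \<Rightarrow> nat list set" where
  "avoiding_perms n P = {w \<in> permutations_of_set {1..n}. \<forall>p\<in>P. \<not> contains_pattern w p}"

definition long_pattern :: "nat \<Rightarrow> nat list" where
  "long_pattern k = [2, 1] @ rev [3..<k+2]"

end

theory Submission
  imports Defs "HOL-Library.Sublist"
begin


lemma subseq_idx1:
  "subseq s w \<Longrightarrow> \<exists>ix. sorted_wrt (<) ix \<and> (\<forall>i\<in>set ix. i < length w) \<and> s = map ((!) w) ix"
proof (induction rule: list_emb.induct)
  case (list_emb_Nil ys)
  then show ?case by (intro exI[of _ "[]"]) auto
next
  case (list_emb_Cons xs ys y)
  then obtain ix where "sorted_wrt (<) ix" "\<forall>i\<in>set ix. i < length ys" "xs = map ((!) ys) ix" by blast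
  then show ?case by (intro exI[of _ "map Suc ix"]) (auto simp: sorted_wrt_map)
next
  case (list_emb_Cons2 x y xs ys)
  then obtain ix where "sorted_wrt (<) ix" "\<forall>i\<in>set ix. i < length ys" "xs = map ((!) ys) ix" by blast
  then show ?case using list_emb_Cons2 by (intro exI[of _ "0 # map Suc ix"]) (auto simp: sorted_wrt_map)
qed

lemma subseq_idx2:
  "sorted_wrt (<) ix \<Longrightarrow> (\<forall>i\<in>set ix. i < length w) \<Longrightarrow> subseq (map ((!) w) ix) w"
proof (induction w arbitrary: ix)
  case Nil
  then show ?case by (cases ix) auto
next
  case (Cons x w)
  show ?case
  proof (cases ix)
    case Nil
    then show ?thesis by simp
  next
    case (Cons i js)
    have js: "\<forall>j\<in>set js. i < j" "sorted_wrt (<) js" using Cons.prems Cons by auto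
    have js2: "sorted_wrt (<) (map (\<lambda>j. j - 1) js)"
      unfolding sorted_wrt_map by (rule sorted_wrt_mono_rel[OF _ js(2)]) (use js in auto)
    have len: "\<forall>j\<in>set (map (\<lambda>j. j - 1) js). j < length w" using js Cons.prems Cons by fastforce
    have eqjs: "map ((!) (x # w)) js = map ((!) w) (map (\<lambda>j. j - 1) js)"
      using js by (auto simp: nth_Cons')
    show ?thesis
    proof (cases i)
      case 0
      have "map ((!) (x # w)) ix = x # map ((!) w) (map (\<lambda>j. j - 1) js)"
        using Cons 0 eqjs by simp
      then show ?thesis by (metis Cons.IH[OF js2 len] subseq_Cons2)
    next
      case (Suc i')
      have s2: "sorted_wrt (<) (map (\<lambda>j. j - 1) ix)"
        unfolding sorted_wrt_map by (rule sorted_wrt_mono_rel[OF _ Cons.prems(1)]) (use js Cons Suc in auto)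
      have l2: "\<forall>j\<in>set (map (\<lambda>j. j - 1) ix). j < length w" using Cons.prems Cons Suc js by auto
      have "map ((!) (x # w)) ix = map ((!) w) (map (\<lambda>j. j - 1) ix)"
        using Cons Suc js by (auto simp: nth_Cons')
      then show ?thesis by (metis Cons.IH[OF s2 l2] list_emb_Cons)
    qed
  qed
qed

lemma contains_pattern_subseq:
  "contains_pattern w p \<longleftrightarrow> (\<exists>s. subseq s w \<and> length s = length p \<and>
      (\<forall>a<length p. \<forall>b<length p. (p ! a < p ! b \<longleftrightarrow> s ! a < s ! b)))"
proof
  assume "contains_pattern w p"
  then obtain ix where h: "length ix = length p" "sorted_wrt (<) ix" "\<forall>i\<in>set ix. i < length w"
    "\<forall>a<length p. \<forall>b<length p. (p ! a < p ! b \<longleftrightarrow> w ! (ix ! a) < w ! (ix ! b))"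
    unfolding contains_pattern_def by blast
  show "\<exists>s. subseq s w \<and> length s = length p \<and> (\<forall>a<length p. \<forall>b<length p. (p ! a < p ! b \<longleftrightarrow> s ! a < s ! b))"
    by (intro exI[of _ "map ((!) w) ix"]) (use h subseq_idx2[OF h(2,3)] in auto)
next
  assume "\<exists>s. subseq s w \<and> length s = length p \<and> (\<forall>a<length p. \<forall>b<length p. (p ! a < p ! b \<longleftrightarrow> s ! a < s ! b))"
  then obtain s where s: "subseq s w" "length s = length p" "\<forall>a<length p. \<forall>b<length p. (p ! a < p ! b \<longleftrightarrow> s ! a < s ! b)" by blast
  from subseq_idx1[OF s(1)] obtain ix where "sorted_wrt (<) ix" "\<forall>i\<in>set ix. i < length w" "s = map ((!) w) ix" by blast
  then show "contains_pattern w p" unfolding contains_pattern_def using s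
    by (intro exI[of _ ix]) auto
qed

definition c123 :: "nat list \<Rightarrow> bool" where
  "c123 w \<longleftrightarrow> (\<exists>a b c. subseq [a,b,c] w \<and> a < b \<and> b < c)"
definition c3214 :: "nat list \<Rightarrow> bool" where
  "c3214 w \<longleftrightarrow> (\<exists>a b c d. subseq [a,b,c,d] w \<and> c < b \<and> b < a \<and> a < d)"
definition cL :: "nat \<Rightarrow> nat list \<Rightarrow> bool" where
  "cL k w \<longleftrightarrow> (\<exists>a b ds. subseq (a#b#ds) w \<and> b < a \<and> length ds = k - 1 \<and>
      sorted_wrt (>) ds \<and> (\<forall>d\<in>set ds. a < d))"

lemma len3: "length s = Suc (Suc (Suc 0)) \<Longrightarrow> (\<exists>a b c. s = [a,b,c])"
  by (auto simp: length_Suc_conv)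
lemma len4: "length s = Suc (Suc (Suc (Suc 0))) \<Longrightarrow> (\<exists>a b c d. s = [a,b,c,d])"
  by (auto simp: length_Suc_conv)

lemma cp123: "contains_pattern w [1,2,3] \<longleftrightarrow> c123 w"
  unfolding contains_pattern_subseq c123_def
proof safe
  fix s assume h: "subseq s w" "length s = length [1::nat,2,3]"
    "\<forall>a<length [1::nat,2,3]. \<forall>b<length [1::nat,2,3]. ([1::nat,2,3] ! a < [1::nat,2,3] ! b \<longleftrightarrow> s ! a < s ! b)"
  obtain a b c where s: "s = [a,b,c]" using h(2) len3[of s] by auto
  have "a < b" using h(3)[rule_format, of 0 1] s by simp
  moreover have "b < c" using h(3)[rule_format, of 1 2] s by simp
  ultimately show "\<exists>a b c. subseq [a,b,c] w \<and> a < b \<and> b < c" using h(1) s by blast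
next
  fix a b c assume h: "subseq [a,b,c] w" "a < b" "b < c"
  then show "\<exists>s. subseq s w \<and> length s = length [1::nat,2,3] \<and>
      (\<forall>a<length [1::nat,2,3]. \<forall>b<length [1::nat,2,3]. ([1::nat,2,3] ! a < [1::nat,2,3] ! b \<longleftrightarrow> s ! a < s ! b))"
    by (intro exI[of _ "[a,b,c]"]) (simp add: All_less_Suc)
qed

lemma cp3214: "contains_pattern w [3,2,1,4] \<longleftrightarrow> c3214 w"
  unfolding contains_pattern_subseq c3214_def
proof safe
  fix s assume h: "subseq s w" "length s = length [3::nat,2,1,4]"
    "\<forall>a<length [3::nat,2,1,4]. \<forall>b<length [3::nat,2,1,4]. ([3::nat,2,1,4] ! a < [3::nat,2,1,4] ! b \<longleftrightarrow> s ! a < s ! b)"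
  obtain a b c d where s: "s = [a,b,c,d]" using h(2) len4[of s] by auto
  have "c < b" using h(3)[rule_format, of 2 1] s by simp
  moreover have "b < a" using h(3)[rule_format, of 1 0] s by simp
  moreover have "a < d" using h(3)[rule_format, of 0 3] s by simp
  ultimately show "\<exists>a b c d. subseq [a,b,c,d] w \<and> c < b \<and> b < a \<and> a < d" using h(1) s by blast
next
  fix a b c d assume h: "subseq [a,b,c,d] w" "c < b" "b < a" "a < d"
  then show "\<exists>s. subseq s w \<and> length s = length [3::nat,2,1,4] \<and>
      (\<forall>a<length [3::nat,2,1,4]. \<forall>b<length [3::nat,2,1,4]. ([3::nat,2,1,4] ! a < [3::nat,2,1,4] ! b \<longleftrightarrow> s ! a < s ! b))"
    by (intro exI[of _ "[a,b,c,d]"]) (simp add: All_less_Suc)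
qed

lemma lp_len: "k \<ge> 1 \<Longrightarrow> length (long_pattern k) = k + 1"
  unfolding long_pattern_def length_append length_rev length_upt by simp
lemma lp0: "long_pattern k ! 0 = 2" by (simp add: long_pattern_def)
lemma lp1: "long_pattern k ! Suc 0 = 1" by (simp add: long_pattern_def)
lemma lpS: "i < k - 1 \<Longrightarrow> long_pattern k ! Suc (Suc i) = k + 1 - i"
  unfolding long_pattern_def by (simp del: upt_Suc add: rev_nth nth_append)

lemma sorted_gt_iff:
  assumes "sorted_wrt (>) ds" "i < length ds" "j < length ds"
  shows "(ds ! i < (ds ! j :: nat)) \<longleftrightarrow> j < i"
proof -
  consider "i < j" | "i = j" | "j < i" by linarith
  then show ?thesis
  proof cases
    case 1 then show ?thesis using sorted_wrt_nth_less[OF assms(1) 1 assms(3)] by simp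
  next
    case 2 then show ?thesis by simp
  next
    case 3 then show ?thesis using sorted_wrt_nth_less[OF assms(1) 3 assms(2)] by simp
  qed
qed

lemma cpL:
  assumes k: "k \<ge> 3"
  shows "contains_pattern w (long_pattern k) \<longleftrightarrow> cL k w"
proof -
  have lenp: "length (long_pattern k) = k + 1" using k by (simp add: lp_len)
  show ?thesis
  unfolding contains_pattern_subseq cL_def lenp
proof (intro iffI; elim exE conjE)
  fix s assume h: "subseq s w" "length s = k + 1"
    "\<forall>a<k+1. \<forall>b<k+1. (long_pattern k ! a < long_pattern k ! b \<longleftrightarrow> s ! a < s ! b)"
  obtain a b ds where s: "s = a # b # ds" using h(2) k
    by (cases s; cases "tl s") auto
  have lds: "length ds = k - 1" using h(2) s by simp
  have "b < a" using h(3)[rule_format, of 1 0] s k by (simp add: lp0 lp1)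
  moreover have "\<forall>d\<in>set ds. a < d"
  proof
    fix d assume "d \<in> set ds"
    then obtain i where i: "i < length ds" "d = ds ! i" by (auto simp: in_set_conv_nth)
    have "Suc i < k" "2 < Suc k - i" using i lds k by auto
    then show "a < d" using h(3)[rule_format, of 0 "Suc (Suc i)"] s k i lds by (simp add: lp0 lpS)
  qed
  moreover have "sorted_wrt (>) ds"
    unfolding sorted_wrt_iff_nth_less
  proof (intro allI impI)
    fix i j assume ij: "i < j" "j < length ds"
    have "Suc j < k" "Suc k - j < Suc k - i" using ij lds k by auto
    then show "ds ! j < ds ! i" using h(3)[rule_format, of "Suc (Suc j)" "Suc (Suc i)"] s k ij lds by (simp add: lpS)
  qed
  ultimately show "\<exists>a b ds. subseq (a # b # ds) w \<and> b < a \<and> length ds = k - 1 \<and> sorted_wrt (>) ds \<and> (\<forall>d\<in>set ds. a < d)"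
    using h(1) s lds by blast
next
  fix a b ds assume h: "subseq (a # b # ds) w" "b < a" "length ds = k - 1" "sorted_wrt (>) ds" "\<forall>d\<in>set ds. a < d"
  have "\<forall>x<k+1. \<forall>y<k+1. (long_pattern k ! x < long_pattern k ! y \<longleftrightarrow> (a#b#ds) ! x < (a#b#ds) ! y)"
  proof (intro allI impI)
    fix x y assume xy: "x < k + 1" "y < k + 1"
    have cx: "x = 0 \<or> x = 1 \<or> (\<exists>i. x = Suc (Suc i) \<and> i < k - 1)" using xy
      by (cases x; cases "x - 1") auto
    have cy: "y = 0 \<or> y = 1 \<or> (\<exists>i. y = Suc (Suc i) \<and> i < k - 1)" using xy
      by (cases y; cases "y - 1") auto
    have A: "a < ds ! i" if "i < k - 1" for i using h(3,5) that by auto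
    have B: "b < ds ! i" if "i < k - 1" for i using A[OF that] h(2) by simp
    have C: "2 < Suc k - i" "Suc 0 < Suc k - i" if "i < k - 1" for i using that by auto
    have D: "\<not> ds ! i < a" if "i < k - 1" for i using A[OF that] by simp
    have E: "\<not> ds ! i < b" if "i < k - 1" for i using B[OF that] by simp
    show "long_pattern k ! x < long_pattern k ! y \<longleftrightarrow> (a#b#ds) ! x < (a#b#ds) ! y"
      using cx cy
    proof (elim disjE exE conjE)
      fix i j assume "x = Suc (Suc i)" "i < k - 1" "y = Suc (Suc j)" "j < k - 1"
      then show ?thesis using sorted_gt_iff[OF h(4), of i j] h(3) by (simp add: lpS) linarith
    qed (use h(2) k in \<open>auto simp: lp0 lp1 lpS A B C D E\<close>)
  qed
  then show "\<exists>s. subseq s w \<and> length s = k + 1 \<and> (\<forall>x<k+1. \<forall>y<k+1. (long_pattern k ! x < long_pattern k ! y \<longleftrightarrow> s ! x < s ! y))"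
    using h k by (intro exI[of _ "a#b#ds"]) auto
qed
qed


definition good :: "nat \<Rightarrow> nat list \<Rightarrow> bool" where
  "good k w \<longleftrightarrow> \<not> c123 w \<and> \<not> c3214 w \<and> \<not> cL k w"

lemma subseq_set: "subseq s w \<Longrightarrow> set s \<subseteq> set w"
  by (induct rule: list_emb.induct) auto

lemma good_subseq: "subseq v w \<Longrightarrow> good k w \<Longrightarrow> good k v"
  unfolding good_def c123_def c3214_def cL_def by (meson subseq_order.trans)

lemma subseq_split_mid:
  assumes "subseq s (xs @ n # ys)" "n \<notin> set xs" "n \<notin> set ys"
  shows "(n \<notin> set s \<and> subseq s (xs @ ys)) \<or> (\<exists>s1 s2. s = s1 @ n # s2 \<and> subseq s1 xs \<and> subseq s2 ys)"
proof -
  obtain p q where pq: "s = p @ q" "subseq p xs" "subseq q (n # ys)"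
    using assms(1) by (auto simp: subseq_append_iff)
  show ?thesis
  proof (cases q)
    case Nil
    then show ?thesis using pq assms subseq_set[OF pq(2)] by (auto intro: subseq_rev_drop_many)
  next
    case (Cons z q')
    show ?thesis
    proof (cases "z = n")
      case True
      then show ?thesis using pq Cons by auto
    next
      case False
      then have "subseq q ys" using pq(3) Cons by auto
      then show ?thesis using pq assms subseq_set[OF pq(2)] subseq_set[of q ys]
        by (auto intro: list_emb_append_mono)
    qed
  qed
qed

lemma good_ins:
  assumes k: "k \<ge> 3" and g: "good k (xs @ ys)" and bnd: "\<forall>z\<in>set (xs @ ys). z < n"
    and len: "length xs \<le> 2"
    and two: "length xs = 2 \<Longrightarrow> xs ! 1 < xs ! 0 \<and>
       \<not> (\<exists>ds. subseq ds ys \<and> length ds = k - 2 \<and> sorted_wrt (>) ds \<and> (\<forall>d\<in>set ds. xs ! 0 < d))"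
  shows "good k (xs @ n # ys)"
proof -
  let ?w = "xs @ n # ys"
  have nx: "n \<notin> set xs" "n \<notin> set ys" using bnd by auto
  have bs: "\<forall>z\<in>set s. z \<le> n" if "subseq s ?w" for s
  proof
    fix z assume "z \<in> set s"
    then have "z \<in> set ?w" using subseq_set[OF that] by blast
    then have "z = n \<or> z \<in> set (xs @ ys)" by auto
    then show "z \<le> n" using bnd by (metis le_eq_less_or_eq)
  qed
  have two': "xs = [x, y] \<Longrightarrow> y < x \<and>
       \<not> (\<exists>ds. subseq ds ys \<and> length ds = k - 2 \<and> sorted_wrt (>) ds \<and> (\<forall>d\<in>set ds. x < d))" for x y
    using two by auto
  have l2: "\<exists>x y. xs = [x,y] \<and> s1 = [x,y]" if "subseq s1 xs" "length s1 = 2" for s1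
  proof -
    have "length s1 \<le> length xs" using list_emb_length[OF that(1)] .
    then have "length xs = length s1" using len that(2) by simp
    then have "s1 = xs" using subseq_same_length[OF that(1)] by simp
    then show ?thesis using that(2) by (auto simp: length_Suc_conv numeral_2_eq_2)
  qed
  have n123: "\<not> c123 ?w"
  proof
    assume "c123 ?w"
    then obtain a b c where h: "subseq [a,b,c] ?w" "a < b" "b < c" unfolding c123_def by blast
    from subseq_split_mid[OF h(1) nx] show False
    proof
      assume "n \<notin> set [a,b,c] \<and> subseq [a,b,c] (xs @ ys)"
      then show False using g h unfolding good_def c123_def by blast
    next
      assume "\<exists>s1 s2. [a,b,c] = s1 @ n # s2 \<and> subseq s1 xs \<and> subseq s2 ys"
      then obtain s1 s2 where s: "[a,b,c] = s1 @ n # s2" "subseq s1 xs" by blast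
      have "c \<le> n" "b \<le> n" using bs[OF h(1)] by auto
      then have "s1 = [a,b]" using s(1) h by (auto simp: Cons_eq_append_conv)
      then obtain x y where "xs = [x,y]" "s1 = [x,y]" using l2[OF s(2)] by auto
      then show False using two'[of x y] h \<open>s1 = [a,b]\<close> by auto
    qed
  qed
  have n3214: "\<not> c3214 ?w"
  proof
    assume "c3214 ?w"
    then obtain a b c d where h: "subseq [a,b,c,d] ?w" "c < b" "b < a" "a < d" unfolding c3214_def by blast
    from subseq_split_mid[OF h(1) nx] show False
    proof
      assume "n \<notin> set [a,b,c,d] \<and> subseq [a,b,c,d] (xs @ ys)"
      then show False using g h unfolding good_def c3214_def by blast
    next
      assume "\<exists>s1 s2. [a,b,c,d] = s1 @ n # s2 \<and> subseq s1 xs \<and> subseq s2 ys"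
      then obtain s1 s2 where s: "[a,b,c,d] = s1 @ n # s2" "subseq s1 xs" by blast
      have "d \<le> n" "a \<le> n" "b \<le> n" using bs[OF h(1)] by auto
      then have "s1 = [a,b,c]" using s(1) h by (auto simp: Cons_eq_append_conv)
      then show False using list_emb_length[OF s(2)] len by simp
    qed
  qed
  have nL: "\<not> cL k ?w"
  proof
    assume "cL k ?w"
    then obtain a b ds where h: "subseq (a#b#ds) ?w" "b < a" "length ds = k - 1" "sorted_wrt (>) ds" "\<forall>d\<in>set ds. a < d"
      unfolding cL_def by blast
    from subseq_split_mid[OF h(1) nx] show False
    proof
      assume "n \<notin> set (a#b#ds) \<and> subseq (a#b#ds) (xs @ ys)"
      then show False using g h unfolding good_def cL_def by blast
    next
      assume "\<exists>s1 s2. a#b#ds = s1 @ n # s2 \<and> subseq s1 xs \<and> subseq s2 ys"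
      then obtain s1 s2 where s: "a#b#ds = s1 @ n # s2" "subseq s1 xs" "subseq s2 ys" by blast
      have bd: "\<forall>z\<in>set (a#b#ds). z \<le> n" using bs[OF h(1)] .
      have "s1 = [a,b] \<and> ds = n # s2"
      proof (cases s1)
        case Nil then show ?thesis using s(1) h bd k by (cases ds) auto
      next
        case (Cons z1 r1)
        show ?thesis
        proof (cases r1)
          case Nil then show ?thesis using s(1) h bd Cons k by (cases ds) auto
        next
          case (Cons z2 r2)
          have ds: "ds = r2 @ n # s2" using s(1) Cons \<open>s1 = z1 # r1\<close> by simp
          have "r2 = []"
          proof (rule ccontr)
            assume "r2 \<noteq> []"
            then obtain u where "u \<in> set r2" by (cases r2) auto
            then have "u > n" using h(4) ds by (auto simp: sorted_wrt_append)
            moreover have "u \<le> n" using bd ds \<open>u \<in> set r2\<close> by auto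
            ultimately show False by simp
          qed
          then show ?thesis using ds s(1) Cons \<open>s1 = z1 # r1\<close> by simp
        qed
      qed
      then have s1: "s1 = [a,b]" and ds: "ds = n # s2" by auto
      obtain x y where xy: "xs = [x,y]" "s1 = [x,y]" using l2[OF s(2)] s1 by auto
      have "subseq s2 ys \<and> length s2 = k - 2 \<and> sorted_wrt (>) s2 \<and> (\<forall>d\<in>set s2. x < d)"
        using s(3) h ds xy s1 by auto
      then show False using two'[OF xy(1)] by blast
    qed
  qed
  show ?thesis using n123 n3214 nL unfolding good_def by blast
qed


definition Av :: "nat \<Rightarrow> nat \<Rightarrow> nat list set" where
  "Av k n = {w \<in> permutations_of_set {1..n}. good k w}"

definition fA :: "nat \<Rightarrow> nat list \<Rightarrow> nat list" where
  "fA n v = hd v # n # tl v"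

definition fD :: "nat \<Rightarrow> nat \<Rightarrow> nat list \<Rightarrow> nat list" where
  "fD n l u = (n - l) # hd u # rev [n - l + 1..<n + 1] @ tl u"

lemma Av_iff: "w \<in> Av k n \<longleftrightarrow> set w = {1..n} \<and> distinct w \<and> good k w"
  by (auto simp: Av_def permutations_of_set_def)

lemma subseq_nth2: "i < j \<Longrightarrow> j < length xs \<Longrightarrow> subseq [xs ! i, xs ! j] xs"
  using subseq_idx2[of "[i,j]" xs] by simp

lemma good_c123: "good k w \<Longrightarrow> subseq [a,b,c] w \<Longrightarrow> a < b \<Longrightarrow> b < c \<Longrightarrow> False"
  unfolding good_def c123_def by blast
lemma good_c3214: "good k w \<Longrightarrow> subseq [a,b,c,d] w \<Longrightarrow> c < b \<Longrightarrow> b < a \<Longrightarrow> a < d \<Longrightarrow> False"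
  unfolding good_def c3214_def by blast
lemma good_cL: "good k w \<Longrightarrow> subseq (a#b#ds) w \<Longrightarrow> b < a \<Longrightarrow> length ds = k - 1 \<Longrightarrow>
    sorted_wrt (>) ds \<Longrightarrow> (\<forall>d\<in>set ds. a < d) \<Longrightarrow> False"
  unfolding good_def cL_def by blast

lemma set_minus_top: "insert (n::nat) A = {1..n} \<Longrightarrow> n \<notin> A \<Longrightarrow> A = {1..n-1}"
proof -
  assume h: "insert n A = {1..n}" "n \<notin> A"
  then have "A = {1..n} - {n}" by blast
  then show "A = {1..n-1}" by auto
qed

lemma Av_cases:
  assumes k: "k \<ge> 3" and n: "n \<ge> 2" and w: "w \<in> Av k n"
  shows "w \<in> fA n ` Av k (n - 1) \<or> (\<exists>l\<in>{0..min (k-2) (n-2)}. w \<in> fD n l ` Av k (n - l - 1))"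
proof -
  have sw: "set w = {1..n}" and dw: "distinct w" and gw: "good k w" using w by (auto simp: Av_iff)
  have "n \<in> set w" using sw n by auto
  then obtain p q where wpq: "w = p @ n # q" by (meson split_list)
  have np: "n \<notin> set p" "n \<notin> set q" using dw wpq by auto
  have bw: "\<forall>z\<in>set w. 1 \<le> z \<and> z \<le> n" using sw by auto
  consider "p = []" | x where "p = [x]" | x y where "p = [x,y]" | a b c p' where "p = a # b # c # p'"
    by (metis list.exhaust)
  then show ?thesis
  proof cases
    case 1
    then have w': "w = n # q" using wpq by simp
    have "1 \<in> set w" using sw n by auto
    then have "q \<noteq> []" using w' n by auto
    have "set q = {1..n-1}" using set_minus_top[of n "set q"] sw w' np by simp
    then have "q \<in> Av k (n - 1)"
      unfolding Av_iff using sw dw w' np gw good_subseq[of q w k] by auto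
    moreover have "w = fD n 0 q" using w' \<open>q \<noteq> []\<close> by (simp add: fD_def)
    ultimately show ?thesis by force
  next
    case (2 x)
    then have w': "w = x # n # q" using wpq by simp
    have "subseq q (n # q)" by (rule list_emb_Cons, rule subseq_order.order_refl)
    then have sub: "subseq (x # q) w" using w' by simp
    have "insert n (set (x # q)) = {1..n}" using sw w' by auto
    then have "set (x # q) = {1..n-1}" using set_minus_top[of n "set (x # q)"] dw w' by simp
    then have "x # q \<in> Av k (n - 1)"
      unfolding Av_iff using dw w' gw good_subseq[OF sub] by auto
    moreover have "w = fA n (x # q)" using w' by (simp add: fA_def)
    ultimately show ?thesis by blast
  next
    case (3 x y)
    then have w': "w = x # y # n # q" using wpq by simp
    have xn: "x < n" "y < n" "1 \<le> y" using bw w' dw by (auto simp: order.order_iff_strict)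
    have xy: "y < x"
    proof (rule ccontr)
      assume "\<not> y < x"
      then have "x < y" using dw w' by (auto simp: not_less order.order_iff_strict)
      moreover have "subseq [x,y,n] w" using w' by simp
      ultimately show False using good_c123[OF gw] xn by blast
    qed
    define D where "D = takeWhile (\<lambda>z. x < z) q"
    define E where "E = dropWhile (\<lambda>z. x < z) q"
    have qDE: "q = D @ E" unfolding D_def E_def by simp
    have Dx: "\<forall>z\<in>set D. x < z" unfolding D_def by (auto dest: set_takeWhileD)
    have xq: "x \<notin> set q" "y \<notin> set q" using dw w' by auto
    have Ex: "\<forall>z\<in>set E. z < x"
    proof (rule ccontr)
      assume "\<not> (\<forall>z\<in>set E. z < x)"
      then obtain z where z: "z \<in> set E" "x \<le> z" by auto
      then obtain t E' where E: "E = t # E'" by (cases E) auto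
      have "\<not> x < t" using hd_dropWhile[of "\<lambda>z. x < z" q] E unfolding E_def by auto
      moreover have "t \<noteq> x" using xq qDE E by auto
      ultimately have tx: "t < x" by simp
      have "z \<noteq> x" using xq qDE z by auto
      then have xz: "x < z" using z by simp
      then have "z \<in> set E'" using z E tx by auto
      then have "subseq [t,z] E" using E by (simp add: subseq_singleton_left)
      then have tzq: "subseq [t,z] q" using qDE by (simp add: subseq_drop_many)
      have "t \<noteq> y" using xq qDE E by auto
      then consider "t < y" | "y < t" by linarith
      then show False
      proof cases
        case 1
        have "subseq [x,y,t,z] w" unfolding w'
          by (rule subseq_Cons2, rule subseq_Cons2, rule list_emb_Cons, rule tzq)
        then show False using good_c3214[OF gw] 1 xy xz by blast
      next
        case 2
        have "subseq [y,t,z] w" unfolding w'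
          by (rule list_emb_Cons, rule subseq_Cons2, rule list_emb_Cons, rule tzq)
        then show False using good_c123[OF gw] 2 tx xz by (meson order.strict_trans)
      qed
    qed
    have dq: "distinct q" using dw w' by simp
    have sD: "sorted_wrt (>) D"
      unfolding sorted_wrt_iff_nth_less
    proof (intro allI impI)
      fix i j assume ij: "i < j" "j < length D"
      have "distinct D" using dq qDE by simp
      then have neq: "D ! i \<noteq> D ! j" using ij by (simp add: nth_eq_iff_index_eq)
      show "D ! j < D ! i"
      proof (rule ccontr)
        assume "\<not> D ! j < D ! i"
        then have lt: "D ! i < D ! j" using neq by simp
        have "subseq [D ! i, D ! j] D" using subseq_nth2 ij .
        then have "subseq [D ! i, D ! j] q" using qDE by (simp add: subseq_rev_drop_many)
        then have "subseq [x, D ! i, D ! j] w" unfolding w'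
          by - (rule subseq_Cons2, rule list_emb_Cons, rule list_emb_Cons)
        moreover have "x < D ! i" using Dx ij by auto
        ultimately show False using good_c123[OF gw] lt by blast
      qed
    qed
    have setD: "set D = {x+1..<n}"
    proof
      show "set D \<subseteq> {x+1..<n}"
      proof
        fix z assume "z \<in> set D"
        then have "z \<in> set q" "x < z" using qDE Dx by auto
        then have zq: "z \<in> set q" "x < z" by auto
        then have "z \<le> n" "z \<noteq> n" using bw w' np by auto
        then show "z \<in> {x+1..<n}" using zq by auto
      qed
    next
      show "{x+1..<n} \<subseteq> set D"
      proof
        fix z assume z: "z \<in> {x+1..<n}"
        then have "z \<in> set w" using sw xn by auto
        then have "z \<in> set q" using w' z xy by auto
        then show "z \<in> set D" using qDE Ex z by auto
      qed
    qed
    have Deq: "D = rev [x+1..<n]"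
    proof -
      have "sorted_wrt (\<lambda>x y. y \<le> x) D" by (rule sorted_wrt_mono_rel[OF _ sD]) simp
      then have "sorted (rev D)" by (simp add: sorted_wrt_rev)
      moreover have "distinct (rev D)" using dq qDE by simp
      ultimately have "rev D = [x+1..<n]"
        using setD by (intro sorted_distinct_set_unique) auto
      then show ?thesis by (metis rev_rev_ident)
    qed
    define U where "U = y # E"
    have sU: "set U = {1..x-1}"
    proof
      show "set U \<subseteq> {1..x-1}"
        using Ex xy bw w' qDE unfolding U_def by fastforce
    next
      show "{1..x-1} \<subseteq> set U"
      proof
        fix z assume z: "z \<in> {1..x-1}"
        then have "z \<in> set w" using sw xn by auto
        moreover have "z \<notin> set D" using Dx z by auto
        ultimately show "z \<in> set U" using w' z qDE xn unfolding U_def by auto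
      qed
    qed
    have dU: "distinct U" using dw w' qDE unfolding U_def by auto
    have "subseq E ((n # D) @ E)" by (rule subseq_drop_many, rule subseq_order.order_refl)
    then have subU: "subseq U w" unfolding U_def w' qDE
      by - (rule list_emb_Cons, rule subseq_Cons2, simp)
    have gU: "good k U" using good_subseq[OF subU gw] .
    have x2: "x \<ge> 2" using xy xn by simp
    have lk: "n - x \<le> k - 2"
    proof (rule ccontr)
      assume "\<not> n - x \<le> k - 2"
      then have big: "n - x \<ge> k - 1" by simp
      define ds where "ds = take (k - 1) (n # D)"
      have nD: "n # D = rev [x+1..<n+1]" using Deq xn by simp
      have lds: "length ds = k - 1" unfolding ds_def nD using big by simp
      have sds: "sorted_wrt (>) ds" unfolding ds_def using sD Dx xn
        by (auto intro: sorted_wrt_take simp: Deq)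
      have ads: "\<forall>d\<in>set ds. x < d"
      proof
        fix d assume "d \<in> set ds"
        then have "d \<in> set (n # D)" unfolding ds_def by (rule in_set_takeD)
        then show "x < d" using Dx xn by auto
      qed
      have "prefix ds (n # D @ E)" unfolding ds_def
        by (metis append_Cons prefix_append take_is_prefix)
      then have "subseq ds (n # D @ E)" by (rule prefix_imp_subseq)
      then have "subseq (x # y # ds) w" using w' qDE by simp
      then show False using good_cL[OF gw _ xy lds sds ads] by blast
    qed
    have "U \<in> Av k (n - (n - x) - 1)" using sU dU gU xn by (simp add: Av_iff)
    moreover have "w = fD n (n - x) U"
    proof -
      have "rev [n - (n - x) + 1..<n + 1] = n # D" using Deq xn by simp
      then show ?thesis unfolding fD_def U_def using w' qDE xn by simp
    qed
    moreover have "n - x \<in> {0..min (k-2) (n-2)}" using lk x2 by simp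
    ultimately show ?thesis by blast
  next
    case (4 a b c p')
    have w': "w = a # b # c # (p' @ n # q)" using wpq 4 by simp
    have lt: "a < n" "b < n" "c < n" using bw w' dw by (auto simp: order.order_iff_strict)
    have "subseq [a,b,n] w" using w' by (simp add: subseq_drop_many)
    then have ba: "b < a" using good_c123[OF gw] lt dw w' by (metis distinct_length_2_or_more linorder_neqE_nat)
    have "subseq [b,c,n] w" using w' by (simp add: subseq_drop_many)
    then have cb: "c < b" using good_c123[OF gw] lt dw w' by (metis distinct_length_2_or_more linorder_neqE_nat)
    have "subseq [a,b,c,n] w" using w' by (simp add: subseq_drop_many)
    then show ?thesis using good_c3214[OF gw _ cb ba lt(1)] by blast
  qed
qed


lemma ins_top: "n \<ge> 1 \<Longrightarrow> insert n {1..n-1} = {1..(n::nat)}"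
  by auto

lemma fA_in:
  assumes k: "k \<ge> 3" and n: "n \<ge> 2" and v: "v \<in> Av k (n - 1)"
  shows "fA n v \<in> Av k n"
proof -
  have sv: "set v = {1..n-1}" and dv: "distinct v" and gv: "good k v" using v by (auto simp: Av_iff)
  have "v \<noteq> []" using sv n by auto
  then obtain x t where vt: "v = x # t" by (cases v) auto
  have "good k ([x] @ n # t)"
  proof (rule good_ins[OF k])
    show "good k ([x] @ t)" using gv vt by simp
    have "\<forall>z\<in>set v. z < n" using sv n by auto
    then show "\<forall>z\<in>set ([x] @ t). z < n" using vt by simp
    show "length [x] \<le> 2" by simp
    show "length [x] = 2 \<Longrightarrow> [x] ! 1 < [x] ! 0 \<and>
       \<not> (\<exists>ds. subseq ds t \<and> length ds = k - 2 \<and> sorted_wrt (>) ds \<and> (\<forall>d\<in>set ds. [x] ! 0 < d))"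
      by simp
  qed
  moreover have "set (fA n v) = insert n (set v)" using vt by (auto simp: fA_def)
  then have "set (fA n v) = {1..n}" using sv n ins_top[of n] by simp
  moreover have "n \<notin> set v" using sv n by simp
  then have "distinct (fA n v)" using dv vt by (auto simp: fA_def)
  ultimately show ?thesis using vt by (simp add: Av_iff fA_def)
qed

lemma g_in:
  assumes k: "k \<ge> 3" and m: "m \<ge> 2" and u: "u \<in> Av k (m - 1)"
  shows "l \<le> k - 2 \<Longrightarrow> m # hd u # rev [m+1..<m+l+1] @ tl u \<in> Av k (m + l)"
proof (induction l)
  case 0
  have su: "set u = {1..m-1}" and du: "distinct u" and gu: "good k u" using u by (auto simp: Av_iff)
  have "u \<noteq> []" using su m by auto
  then have eq: "m # hd u # rev [m+1..<m+0+1] @ tl u = [] @ m # u" by simp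
  have "good k ([] @ m # u)"
  proof (rule good_ins[OF k])
    show "good k ([] @ u)" using gu by simp
    show "\<forall>z\<in>set ([] @ u). z < m" using su m by auto
    show "length ([]::nat list) \<le> 2" by simp
    show "length ([]::nat list) = 2 \<Longrightarrow> [] ! 1 < [] ! 0 \<and>
       \<not> (\<exists>ds. subseq ds u \<and> length ds = k - 2 \<and> sorted_wrt (>) ds \<and> (\<forall>d\<in>set ds. [] ! 0 < d))"
      by simp
  qed
  moreover have "set (m # u) = {1..m}" using su m ins_top[of m] by simp
  moreover have "distinct (m # u)" using du su m by simp
  ultimately show ?case unfolding eq by (simp add: Av_iff)
next
  case (Suc l)
  have su: "set u = {1..m-1}" using u by (auto simp: Av_iff)
  have "u \<noteq> []" using su m by auto
  then have "hd u \<in> set u" "set (tl u) \<subseteq> set u" by (simp, cases u, auto)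
  then have hu: "hd u \<in> {1..m-1}" "set (tl u) \<subseteq> {1..m-1}" using su by simp_all
  define t where "t = rev [m+1..<m+l+1] @ tl u"
  have sett: "set t = {m+1..<m+l+1} \<union> set (tl u)" unfolding t_def by (simp del: upt_Suc)
  have IH: "[m, hd u] @ t \<in> Av k (m + l)" using Suc unfolding t_def by simp
  then have st: "set ([m, hd u] @ t) = {1..m+l}" and dt: "distinct ([m, hd u] @ t)"
    and gt: "good k ([m, hd u] @ t)" by (auto simp: Av_iff)
  have nods: False if ds: "subseq ds t" "length ds = k - 2" "sorted_wrt (>) ds" "\<forall>d\<in>set ds. m < d" for ds
  proof -
    have sds: "set ds \<subseteq> set t" using subseq_set[OF ds(1)] .
    have "set ds \<subseteq> {m+1..<m+l+1}"
    proof
      fix d assume d: "d \<in> set ds"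
      then have "d \<in> set t" "m < d" using sds ds(4) by auto
      moreover have "d \<notin> set (tl u)" using hu(2) \<open>m < d\<close> by auto
      ultimately show "d \<in> {m+1..<m+l+1}" using sett by blast
    qed
    then have "card (set ds) \<le> l" using card_mono[of "{m+1..<m+l+1}" "set ds"] by simp
    moreover have "distinct ds" using ds(3) by (induction ds) auto
    ultimately have "length ds \<le> l" by (simp add: distinct_card)
    then show False using ds(2) Suc.prems by simp
  qed
  have hm: "hd u < m" using hu(1) by auto
  have g2: "good k ([m, hd u] @ (m + l + 1) # t)"
  proof (rule good_ins[OF k gt])
    show "\<forall>z\<in>set ([m, hd u] @ t). z < m + l + 1" using st by auto
    show "length [m, hd u] \<le> 2" by simp
    show "length [m, hd u] = 2 \<Longrightarrow> [m, hd u] ! 1 < [m, hd u] ! 0 \<and>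
       \<not> (\<exists>ds. subseq ds t \<and> length ds = k - 2 \<and> sorted_wrt (>) ds \<and> (\<forall>d\<in>set ds. [m, hd u] ! 0 < d))"
      using hm nods by auto
  qed
  have eq: "m # hd u # rev [m+1..<m+Suc l+1] @ tl u = [m, hd u] @ (m + l + 1) # t" unfolding t_def by simp
  have "set ([m, hd u] @ (m + l + 1) # t) = insert (m + l + 1) (set ([m, hd u] @ t))" by auto
  then have "set ([m, hd u] @ (m + l + 1) # t) = {1..m + Suc l}" using st ins_top[of "m + l + 1"] by simp
  moreover have "m + l + 1 \<notin> set ([m, hd u] @ t)" using st by simp
  then have "distinct ([m, hd u] @ (m + l + 1) # t)" using dt
    by (simp only: distinct_append distinct.simps set_append) auto
  ultimately show ?case unfolding eq using g2 by (simp add: Av_iff)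
qed

lemma fD_in:
  assumes k: "k \<ge> 3" and l: "l \<le> k - 2" "l \<le> n - 2" and n: "n \<ge> 2" and u: "u \<in> Av k (n - l - 1)"
  shows "fD n l u \<in> Av k n"
proof -
  have "n - l \<ge> 2" using l n by simp
  from g_in[OF k this _ l(1)] u have "(n - l) # hd u # rev [(n-l)+1..<(n-l)+l+1] @ tl u \<in> Av k ((n - l) + l)"
    by simp
  then show ?thesis using l n by (simp add: fD_def)
qed


lemma Av_finite: "finite (Av k n)"
  unfolding Av_def by simp

lemma Av_nonempty_list: "n \<ge> 1 \<Longrightarrow> u \<in> Av k n \<Longrightarrow> u \<noteq> []"
  by (auto simp: Av_iff)

lemma Av_decomp:
  assumes k: "k \<ge> 3" and n: "n \<ge> 2"
  shows "Av k n = fA n ` Av k (n - 1) \<union> (\<Union>l\<in>{0..min (k-2) (n-2)}. fD n l ` Av k (n - l - 1))"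
proof
  show "Av k n \<subseteq> fA n ` Av k (n - 1) \<union> (\<Union>l\<in>{0..min (k-2) (n-2)}. fD n l ` Av k (n - l - 1))"
    using Av_cases[OF k n] by blast
next
  show "fA n ` Av k (n - 1) \<union> (\<Union>l\<in>{0..min (k-2) (n-2)}. fD n l ` Av k (n - l - 1)) \<subseteq> Av k n"
    using fA_in[OF k n] fD_in[OF k _ _ n] by auto
qed

lemma Av_card:
  assumes k: "k \<ge> 3" and n: "n \<ge> 2"
  shows "card (Av k n) = card (Av k (n - 1)) + (\<Sum>l\<in>{0..min (k-2) (n-2)}. card (Av k (n - l - 1)))"
proof -
  let ?L = "{0..min (k-2) (n-2)}"
  have injA: "inj_on (fA n) (Av k (n - 1))"
  proof
    fix v v' assume v: "v \<in> Av k (n - 1)" "v' \<in> Av k (n - 1)" "fA n v = fA n v'"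
    have n1: "n - 1 \<ge> 1" using n by simp
    have "v \<noteq> []" "v' \<noteq> []" using Av_nonempty_list[OF n1 v(1)] Av_nonempty_list[OF n1 v(2)] by simp_all
    moreover have "hd v = hd v' \<and> tl v = tl v'" using v(3) by (simp add: fA_def)
    ultimately show "v = v'" by (cases v; cases v') simp_all
  qed
  have injD: "inj_on (fD n l) (Av k (n - l - 1))" if l: "l \<in> ?L" for l
  proof
    fix v v' assume v: "v \<in> Av k (n - l - 1)" "v' \<in> Av k (n - l - 1)" "fD n l v = fD n l v'"
    have "n - l - 1 \<ge> 1" using l n by auto
    then have "v \<noteq> []" "v' \<noteq> []" using Av_nonempty_list[OF _ v(1)] Av_nonempty_list[OF _ v(2)] by simp_all
    moreover have "hd v = hd v' \<and> tl v = tl v'" using v(3) by (simp add: fD_def)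
    ultimately show "v = v'" by (cases v; cases v') simp_all
  qed
  have hdD: "hd w = n - l \<and> w ! 1 < n" if wl: "w \<in> fD n l ` Av k (n - l - 1)" "l \<in> ?L" for w l
  proof -
    obtain u where u: "u \<in> Av k (n - l - 1)" "w = fD n l u" using wl(1) by blast
    have "n - l - 1 \<ge> 1" using wl(2) n by auto
    then have "u \<noteq> []" using Av_nonempty_list[OF _ u(1)] by simp
    then have "hd u \<in> set u" by simp
    then have "hd u \<in> {1..n - l - 1}" using u(1) by (simp add: Av_iff)
    then have "hd u < n" using wl(2) n by simp linarith
    then show ?thesis using u(2) by (simp add: fD_def)
  qed
  have A1: "w ! 1 = n" if "w \<in> fA n ` Av k (n - 1)" for w
    using that by (auto simp: fA_def)
  have disj1: "fA n ` Av k (n - 1) \<inter> (\<Union>l\<in>?L. fD n l ` Av k (n - l - 1)) = {}"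
  proof (rule ccontr)
    assume "fA n ` Av k (n - 1) \<inter> (\<Union>l\<in>?L. fD n l ` Av k (n - l - 1)) \<noteq> {}"
    then obtain w l where wl: "w \<in> fA n ` Av k (n - 1)" "l \<in> ?L" "w \<in> fD n l ` Av k (n - l - 1)" by blast
    have "w ! 1 = n" using A1[OF wl(1)] .
    moreover have "w ! 1 < n" using hdD[OF wl(3) wl(2)] by simp
    ultimately show False by simp
  qed
  have disj2: "fD n l ` Av k (n - l - 1) \<inter> fD n l' ` Av k (n - l' - 1) = {}"
    if "l \<in> ?L" "l' \<in> ?L" "l \<noteq> l'" for l l'
  proof -
    have "n - l \<noteq> n - l'" using that n by auto
    show ?thesis
    proof (rule equals0I)
      fix w assume "w \<in> fD n l ` Av k (n - l - 1) \<inter> fD n l' ` Av k (n - l' - 1)"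
      then have "hd w = n - l" "hd w = n - l'" using hdD[of w l] hdD[of w l'] that by auto
      then show False using \<open>n - l \<noteq> n - l'\<close> by simp
    qed
  qed
  have "card (Av k n) = card (fA n ` Av k (n - 1)) + card (\<Union>l\<in>?L. fD n l ` Av k (n - l - 1))"
    unfolding Av_decomp[OF k n] by (rule card_Un_disjoint[OF _ _ disj1]) (simp_all add: Av_finite)
  also have "card (\<Union>l\<in>?L. fD n l ` Av k (n - l - 1)) = (\<Sum>l\<in>?L. card (fD n l ` Av k (n - l - 1)))"
    by (rule card_UN_disjoint) (simp, simp add: Av_finite, use disj2 in blast)
  also have "\<dots> = (\<Sum>l\<in>?L. card (Av k (n - l - 1)))"
    by (rule sum.cong) (simp, rule card_image[OF injD])
  also have "card (fA n ` Av k (n - 1)) = card (Av k (n - 1))" by (rule card_image[OF injA])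
  finally show ?thesis .
qed


unbundle fps_syntax

lemma good_Nil: "good k []"
  unfolding good_def c123_def c3214_def cL_def by simp

lemma good_single: "good k [x]"
  unfolding good_def c123_def c3214_def cL_def by (auto dest: list_emb_length)

lemma Av0: "card (Av k 0) = 1"
proof -
  have "Av k 0 = {[]}" unfolding Av_def using good_Nil by auto
  then show ?thesis by simp
qed

lemma Av1: "card (Av k 1) = 1"
proof -
  have "Av k 1 = {[1]}" unfolding Av_def using good_single by auto
  then show ?thesis by simp
qed

lemma rec_form:
  assumes k: "k \<ge> 3" and n: "n \<ge> 2"
  shows "card (Av k n) = card (Av k (n - 1)) + (\<Sum>j\<in>{1..k-1}. if j < n then card (Av k (n - j)) else 0)"
proof -
  let ?M = "min (k-2) (n-2)"
  have "(\<Sum>j\<in>{1..k-1}. if j < n then card (Av k (n - j)) else 0) = (\<Sum>j\<in>{j\<in>{1..k-1}. j < n}. card (Av k (n - j)))"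
    by (rule sum.inter_filter[symmetric]) simp
  also have "{j\<in>{1..k-1}. j < n} = Suc ` {0..?M}"
  proof -
    have "{j\<in>{1..k-1}. j < n} = {1..Suc ?M}" using k n by auto
    then show ?thesis by (simp add: image_Suc_atLeastAtMost)
  qed
  also have "(\<Sum>j\<in>Suc ` {0..?M}. card (Av k (n - j))) = (\<Sum>l\<in>{0..?M}. card (Av k (n - l - 1)))"
    by (subst sum.reindex) auto
  finally show ?thesis using Av_card[OF k n] by simp
qed

lemma tele: "(1 - fps_X) * (\<Sum>j\<in>{1..m}. fps_X ^ j) = (fps_X - fps_X ^ Suc m :: rat fps)"
proof (induction m)
  case 0
  then show ?case by simp
next
  case (Suc m)
  have "(\<Sum>j\<in>{1..Suc m}. fps_X ^ j) = (\<Sum>j\<in>{1..m}. fps_X ^ j) + (fps_X ^ Suc m :: rat fps)"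
    by (simp add: sum.cl_ivl_Suc)
  then have "(1 - fps_X) * (\<Sum>j\<in>{1..Suc m}. fps_X ^ j) = (1 - fps_X) * (\<Sum>j\<in>{1..m}. fps_X ^ j) + (1 - fps_X) * (fps_X ^ Suc m :: rat fps)"
    by (simp add: distrib_left)
  also have "\<dots> = fps_X - fps_X ^ Suc (Suc m)" unfolding Suc.IH by (simp add: algebra_simps)
  finally show ?case .
qed

theorem gf_Av:
  assumes k: "k \<ge> 3"
  shows "Abs_fps (\<lambda>n. of_nat (card (Av k n))) =
    (1 - 2 * fps_X + fps_X ^ k) / (1 - 3 * fps_X + fps_X ^ 2 + fps_X ^ k :: rat fps)"
proof -
  define a where "a n = (of_nat (card (Av k n)) :: rat)" for n
  define B where "B = Abs_fps (\<lambda>n. if n = 0 then 0 else a n)"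
  define S where "S = (\<Sum>j\<in>{1..k-1}. fps_X ^ j :: rat fps)"
  define X where "X = (fps_X :: rat fps)"
  have hB: "B = X + X * B + S * B"
  proof (rule fps_ext)
    fix n
    have SB: "(S * B) $ n = (\<Sum>j\<in>{1..k-1}. if n < j then 0 else B $ (n - j))"
      unfolding S_def by (simp add: sum_distrib_right fps_sum_nth fps_X_power_mult_nth)
    have e: "(X + X * B + S * B) $ n = X $ n + (X * B) $ n + (S * B) $ n" by simp
    consider "n = 0" | "n = 1" | "n \<ge> 2" by linarith
    then show "B $ n = (X + X * B + S * B) $ n"
    proof cases
      case 1
      have z: "(S * B) $ n = 0" unfolding SB using 1 by (intro sum.neutral) auto
      show ?thesis unfolding e z using 1 by (simp add: B_def X_def)
    next
      case 2
      have z: "(S * B) $ n = 0" unfolding SB using 2 by (intro sum.neutral) (auto simp: B_def)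
      have "card (Av k (Suc 0)) = 1" using Av1 by simp
      then show ?thesis unfolding e z using 2 by (simp add: B_def X_def a_def fps_X_mult_nth)
    next
      case 3
      have "(S * B) $ n = (\<Sum>j\<in>{1..k-1}. if j < n then a (n - j) else 0)"
        unfolding SB by (rule sum.cong) (auto simp: B_def)
      moreover have "a n = a (n - 1) + (\<Sum>j\<in>{1..k-1}. if j < n then a (n - j) else 0)"
        unfolding a_def rec_form[OF k 3] of_nat_add of_nat_sum
        by (intro arg_cong2[where f="(+)"] refl sum.cong) auto
      then have "B $ n = a (n - 1) + (\<Sum>j\<in>{1..k-1}. if j < n then a (n - j) else 0)"
        using 3 by (simp add: B_def)
      ultimately show ?thesis unfolding e using 3 by (simp add: B_def X_def fps_X_mult_nth)
    qed
  qed
  have hS: "(1 - X) * S = X - X ^ k"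
    using tele[of "k - 1"] k unfolding S_def X_def by simp
  have h1: "B - X * B - S * B = X"
  proof -
    have "B - X * B - S * B = (X + X * B + S * B) - X * B - S * B"
      using hB by (rule arg_cong[where f = "\<lambda>t. t - X * B - S * B"])
    then show ?thesis by simp
  qed
  have hBD: "B * (1 - 3 * X + X ^ 2 + X ^ k) = X - X ^ 2"
  proof -
    have "B * (1 - 3 * X + X ^ 2 + X ^ k) = B * ((1 - X) * (1 - X) - (X - X ^ k))"
      by (simp add: algebra_simps power2_eq_square numeral_3_eq_3)
    also have "\<dots> = B * ((1 - X) * (1 - X) - (1 - X) * S)" by (simp only: hS)
    also have "\<dots> = (1 - X) * (B - X * B - S * B)" by (simp add: algebra_simps)
    also have "\<dots> = (1 - X) * X" by (simp only: h1)
    also have "\<dots> = X - X ^ 2" by (simp add: algebra_simps power2_eq_square)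
    finally show ?thesis .
  qed
  have hA: "Abs_fps (\<lambda>n. of_nat (card (Av k n))) = 1 + B"
  proof (rule fps_ext)
    fix n show "Abs_fps (\<lambda>n. of_nat (card (Av k n))) $ n = (1 + B) $ n"
      by (cases "n = 0") (simp_all add: B_def a_def Av0)
  qed
  define D where "D = 1 - 3 * X + X ^ 2 + X ^ k"
  have D0: "D $ 0 \<noteq> 0" using k unfolding D_def X_def by simp
  have AD: "(1 + B) * D = 1 - 2 * X + X ^ k"
  proof -
    have "(1 + B) * D = D + B * D" by (simp add: algebra_simps)
    also have "\<dots> = D + (X - X ^ 2)" using hBD unfolding D_def by simp
    also have "\<dots> = 1 - 2 * X + X ^ k" unfolding D_def
      by (simp add: algebra_simps power2_eq_square numeral_3_eq_3 numeral_2_eq_2)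
    finally show ?thesis .
  qed
  have "(1 - 2 * X + X ^ k) / D = (1 - 2 * X + X ^ k) * inverse D"
    by (rule fps_divide_unit[OF D0])
  also have "\<dots> = (1 + B) * (D * inverse D)" unfolding AD[symmetric] by (simp add: mult.assoc)
  also have "\<dots> = 1 + B" using inverse_mult_eq_1'[OF D0] by simp
  finally show ?thesis unfolding hA D_def X_def by simp
qed


lemma avoid_eq:
  assumes k: "k \<ge> 3"
  shows "avoiding_perms n {[1,2,3], [3,2,1,4], long_pattern k} = Av k n"
  unfolding avoiding_perms_def Av_def good_def using cp123 cp3214 cpL[OF k] by auto

theorem mainTheorem9:
  fixes k :: nat
  assumes "k \<ge> 3"
  shows "Abs_fps (\<lambda>n. of_nat (card (avoiding_perms n {[1,2,3], [3,2,1,4], long_pattern k}))) =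
    (1 - 2 * fps_X + fps_X ^ k) / (1 - 3 * fps_X + fps_X ^ 2 + fps_X ^ k :: rat fps)"
  unfolding avoid_eq[OF assms] by (rule gf_Av[OF assms])

end
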